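(* Let $S=(\mathcal{E},\Sigma,X,\mathcal{O})$ be an entity and for $A\subseteq X$ define $cl(A)=\bigcap\{X\setminus O(e,p): (e,p)\in\mathcal{E}\times\Sigma,\ O(e,p)\subseteq X\setminus A\}$ (the empty intersection being $X$). Then $cl$ is a closure operator on $X$; every $O(e,p)$ is open for this closure (i.e. $X\setminus O(e,p)$ is closed); for all $e,p$ and $A\subseteq X$, $O(e,p)\subseteq X\setminus cl(A)\iff O(e,p)\subseteq X\setminus A$; and $eig(A)=eig(int(A))$, where $int(A)=X\setminus cl(X\setminus A)$.
   Context: An entity $S=(\mathcal{E},\Sigma,X,\mathcal{O})$ consists of sets $\mathcal{E},\Sigma$ and for each $e\in\mathcal{E},p\in\Sigma$ a nonempty set $O(e,p)$, with $X=\bigcup O(e,p)$. A closure operator on $X$ is a map $cl:\mathcal{P}(X)\to\mathcal{P}(X)$ with $K\subseteq cl(K)$, $K\subseteq L\Rightarrow cl(K)\subseteq cl(L)$, $cl(cl(K))=cl(K)$, $cl(\emptyset)=\emptyset$. The central eigen map is $eig(A)=\{(e,p):O(e,p)\subseteq A\}$. *)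

theory Defs
  imports Main
begin

definition entity :: "'e set \<Rightarrow> 'p set \<Rightarrow> ('e \<Rightarrow> 'p \<Rightarrow> 'x set) \<Rightarrow> bool" where
  "entity E Sig Out \<longleftrightarrow> (\<forall>e\<in>E. \<forall>p\<in>Sig. Out e p \<noteq> {})"

definition outcomes :: "'e set \<Rightarrow> 'p set \<Rightarrow> ('e \<Rightarrow> 'p \<Rightarrow> 'x set) \<Rightarrow> 'x set" where
  "outcomes E Sig Out = (\<Union>e\<in>E. \<Union>p\<in>Sig. Out e p)"

definition closure_operator :: "'x set \<Rightarrow> ('x set \<Rightarrow> 'x set) \<Rightarrow> bool" where
  "closure_operator X cl \<longleftrightarrow>
     (\<forall>K. K \<subseteq> X \<longrightarrow> cl K \<subseteq> X) \<and>
     (\<forall>K. K \<subseteq> X \<longrightarrow> K \<subseteq> cl K) \<and>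
     (\<forall>K L. K \<subseteq> L \<and> L \<subseteq> X \<longrightarrow> cl K \<subseteq> cl L) \<and>
     (\<forall>K. K \<subseteq> X \<longrightarrow> cl (cl K) = cl K) \<and>
     cl {} = {}"

definition ent_cl :: "'e set \<Rightarrow> 'p set \<Rightarrow> ('e \<Rightarrow> 'p \<Rightarrow> 'x set) \<Rightarrow> 'x set \<Rightarrow> 'x set" where
  "ent_cl E Sig Out A =
     outcomes E Sig Out \<inter>
     \<Inter>{outcomes E Sig Out - Out e p | e p. e \<in> E \<and> p \<in> Sig \<and> Out e p \<subseteq> outcomes E Sig Out - A}"

definition ent_int :: "'e set \<Rightarrow> 'p set \<Rightarrow> ('e \<Rightarrow> 'p \<Rightarrow> 'x set) \<Rightarrow> 'x set \<Rightarrow> 'x set" where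
  "ent_int E Sig Out A = outcomes E Sig Out - ent_cl E Sig Out (outcomes E Sig Out - A)"

definition eig :: "'e set \<Rightarrow> 'p set \<Rightarrow> ('e \<Rightarrow> 'p \<Rightarrow> 'x set) \<Rightarrow> 'x set \<Rightarrow> ('e \<times> 'p) set" where
  "eig E Sig Out A = {(e, p). e \<in> E \<and> p \<in> Sig \<and> Out e p \<subseteq> A}"

end

theory Submission
  imports Defs
begin
lemma cl_mem:
  "x \<in> ent_cl E Sig Out A \<longleftrightarrow> x \<in> outcomes E Sig Out \<and>
     (\<forall>e\<in>E. \<forall>p\<in>Sig. x \<in> Out e p \<longrightarrow> Out e p \<inter> A \<noteq> {})"
  unfolding ent_cl_def outcomes_def by blast

lemma mem_out: "x \<in> outcomes E Sig Out \<longleftrightarrow> (\<exists>e\<in>E. \<exists>p\<in>Sig. x \<in> Out e p)"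
  unfolding outcomes_def by blast

lemma clD: "x \<in> ent_cl E Sig Out A \<Longrightarrow> e \<in> E \<Longrightarrow> p \<in> Sig \<Longrightarrow> x \<in> Out e p \<Longrightarrow> \<exists>y\<in>A. y \<in> Out e p"
  unfolding cl_mem by blast
lemma clX: "x \<in> ent_cl E Sig Out A \<Longrightarrow> x \<in> outcomes E Sig Out"
  unfolding cl_mem by blast
lemma clI: "x \<in> outcomes E Sig Out \<Longrightarrow> (\<And>e p. e \<in> E \<Longrightarrow> p \<in> Sig \<Longrightarrow> x \<in> Out e p \<Longrightarrow> \<exists>y\<in>A. y \<in> Out e p)
  \<Longrightarrow> x \<in> ent_cl E Sig Out A"
  unfolding cl_mem by blast

lemma cl_sub: "ent_cl E Sig Out K \<subseteq> outcomes E Sig Out"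
  by (rule subsetI, erule clX)
lemma cl_ext: "K \<subseteq> outcomes E Sig Out \<Longrightarrow> K \<subseteq> ent_cl E Sig Out K"
  by (auto simp: cl_mem)
lemma cl_mono: "K \<subseteq> L \<Longrightarrow> ent_cl E Sig Out K \<subseteq> ent_cl E Sig Out L"
proof
  fix x assume KL: "K \<subseteq> L" and x: "x \<in> ent_cl E Sig Out K"
  show "x \<in> ent_cl E Sig Out L"
  proof (rule clI)
    show "x \<in> outcomes E Sig Out" by (rule clX[OF x])
    fix e p assume "e \<in> E" "p \<in> Sig" "x \<in> Out e p"
    from clD[OF x this] KL show "\<exists>y\<in>L. y \<in> Out e p" by blast
  qed
qed
lemma cl_idem1: "ent_cl E Sig Out (ent_cl E Sig Out K) \<subseteq> ent_cl E Sig Out K"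
proof
  fix x assume x: "x \<in> ent_cl E Sig Out (ent_cl E Sig Out K)"
  show "x \<in> ent_cl E Sig Out K"
  proof (rule clI)
    show "x \<in> outcomes E Sig Out" by (rule clX[OF x])
    fix e p assume e: "e \<in> E" and p: "p \<in> Sig" and xo: "x \<in> Out e p"
    from clD[OF x e p xo] obtain y where y1: "y \<in> ent_cl E Sig Out K" and y2: "y \<in> Out e p" by blast
    from clD[OF y1 e p y2] show "\<exists>y\<in>K. y \<in> Out e p" .
  qed
qed
lemma cl_empty: "ent_cl E Sig Out {} = {}"
  by (auto simp: cl_mem mem_out)

lemma out_sub: "e \<in> E \<Longrightarrow> p \<in> Sig \<Longrightarrow> Out e p \<subseteq> outcomes E Sig Out"
  unfolding outcomes_def by blast

theorem mainTheorem18: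
  fixes E :: "'e set" and Sig :: "'p set" and Out :: "'e \<Rightarrow> 'p \<Rightarrow> 'x set"
  assumes "entity E Sig Out"
  defines "X \<equiv> outcomes E Sig Out"
  shows "closure_operator X (ent_cl E Sig Out)
    \<and> (\<forall>e\<in>E. \<forall>p\<in>Sig. ent_cl E Sig Out (X - Out e p) = X - Out e p)
    \<and> (\<forall>e\<in>E. \<forall>p\<in>Sig. \<forall>A. A \<subseteq> X \<longrightarrow>
          (Out e p \<subseteq> X - ent_cl E Sig Out A \<longleftrightarrow> Out e p \<subseteq> X - A))
    \<and> (\<forall>A. A \<subseteq> X \<longrightarrow> eig E Sig Out A = eig E Sig Out (ent_int E Sig Out A))"
proof (intro conjI)
  show "closure_operator X (ent_cl E Sig Out)"
    unfolding closure_operator_def X_def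
  proof (intro conjI allI impI)
    fix K :: "'x set" assume K: "K \<subseteq> outcomes E Sig Out"
    show "ent_cl E Sig Out K \<subseteq> outcomes E Sig Out" by (rule cl_sub)
    show "K \<subseteq> ent_cl E Sig Out K" using K by (rule cl_ext)
    have "ent_cl E Sig Out K \<subseteq> ent_cl E Sig Out (ent_cl E Sig Out K)"
      by (rule cl_ext[OF cl_sub])
    then show "ent_cl E Sig Out (ent_cl E Sig Out K) = ent_cl E Sig Out K"
      using cl_idem1[of E Sig Out K] by (rule equalityI[rotated])
  next
    fix K L :: "'x set" assume "K \<subseteq> L \<and> L \<subseteq> outcomes E Sig Out"
    then show "ent_cl E Sig Out K \<subseteq> ent_cl E Sig Out L" by (intro cl_mono) simp
  next
    show "ent_cl E Sig Out {} = {}" by (rule cl_empty)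
  qed
  show "\<forall>e\<in>E. \<forall>p\<in>Sig. ent_cl E Sig Out (X - Out e p) = X - Out e p"
  proof (intro ballI equalityI subsetI)
    fix e p x assume e: "e \<in> E" and p: "p \<in> Sig" and x: "x \<in> ent_cl E Sig Out (X - Out e p)"
    have "x \<in> X" using clX[OF x] X_def by simp
    moreover have "x \<notin> Out e p"
    proof
      assume "x \<in> Out e p"
      from clD[OF x e p this] show False by blast
    qed
    ultimately show "x \<in> X - Out e p" by simp
  next
    fix e p x assume e: "e \<in> E" and p: "p \<in> Sig" and x: "x \<in> X - Out e p"
    show "x \<in> ent_cl E Sig Out (X - Out e p)"
    proof (rule clI)
      show "x \<in> outcomes E Sig Out" using x X_def by simp
      fix e' p' assume "e' \<in> E" "p' \<in> Sig" "x \<in> Out e' p'"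
      then show "\<exists>y\<in>X - Out e p. y \<in> Out e' p'" using x by blast
    qed
  qed
  show "\<forall>e\<in>E. \<forall>p\<in>Sig. \<forall>A. A \<subseteq> X \<longrightarrow>
          (Out e p \<subseteq> X - ent_cl E Sig Out A \<longleftrightarrow> Out e p \<subseteq> X - A)"
  proof (intro ballI allI impI)
    fix e p A assume e: "e \<in> E" and p: "p \<in> Sig" and A: "A \<subseteq> X"
    have O: "Out e p \<subseteq> X" using out_sub[of e E p Sig Out, OF e p] X_def by simp
    have AC: "A \<subseteq> ent_cl E Sig Out A" using A unfolding X_def by (auto simp: cl_mem)
    show "Out e p \<subseteq> X - ent_cl E Sig Out A \<longleftrightarrow> Out e p \<subseteq> X - A"
    proof
      assume "Out e p \<subseteq> X - ent_cl E Sig Out A" then show "Out e p \<subseteq> X - A" using AC by blast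
    next
      assume h: "Out e p \<subseteq> X - A"
      have "Out e p \<inter> ent_cl E Sig Out A = {}"
      proof (rule ccontr)
        assume "Out e p \<inter> ent_cl E Sig Out A \<noteq> {}"
        then obtain x where "x \<in> Out e p" "x \<in> ent_cl E Sig Out A" by blast
        then have "Out e p \<inter> A \<noteq> {}" using e p by (simp add: cl_mem)
        then show False using h by blast
      qed
      then show "Out e p \<subseteq> X - ent_cl E Sig Out A" using O by blast
    qed
  qed
  show "\<forall>A. A \<subseteq> X \<longrightarrow> eig E Sig Out A = eig E Sig Out (ent_int E Sig Out A)"
  proof (intro allI impI)
    fix A assume A: "A \<subseteq> X"
    have sub: "ent_int E Sig Out A \<subseteq> A"
      using A unfolding ent_int_def X_def by (auto simp: cl_mem)
    have "Out e p \<subseteq> ent_int E Sig Out A" if e: "e \<in> E" and p: "p \<in> Sig" and h: "Out e p \<subseteq> A" for e p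
    proof
      fix x assume x: "x \<in> Out e p"
      have xX: "x \<in> X" using out_sub[of e E p Sig Out, OF e p] x X_def by auto
      have "x \<notin> ent_cl E Sig Out (X - A)"
      proof
        assume "x \<in> ent_cl E Sig Out (X - A)"
        then have "Out e p \<inter> (X - A) \<noteq> {}" using e p x unfolding X_def by (simp add: cl_mem)
        then show False using h by blast
      qed
      then show "x \<in> ent_int E Sig Out A" using xX unfolding ent_int_def X_def by simp
    qed
    then show "eig E Sig Out A = eig E Sig Out (ent_int E Sig Out A)"
      using sub unfolding eig_def by blast
  qed
qed

end
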